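(* For $n\ge3$, the number of cyclic permutations $\pi\in\mathfrak S_n$ whose one-line notation avoids $321$ and such that every cyclic rotation of the cycle form $C(\pi)$ avoids $1342$ equals $n-1$.
   Context: A permutation $\pi\in\mathfrak S_n$ is cyclic if it consists of a single $n$-cycle. For cyclic $\pi$, $C(\pi)=(1,c_2,\dots,c_n)$ with $c_2=\pi(1)$, $c_{i+1}=\pi(c_i)$; its cyclic rotations are the sequences $c_ic_{i+1}\cdots c_nc_1\cdots c_{i-1}$ (with $c_1=1$). A sequence avoids a pattern $\sigma\in\mathfrak S_m$ if no subsequence of length $m$ is in the same relative order as $\sigma$. *)

theory Defs
  imports "HOL-Combinatorics.Permutations"
begin

definition cyclic_perm :: "nat \<Rightarrow> (nat \<Rightarrow> nat) \<Rightarrow> bool" where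
  "cyclic_perm n \<pi> \<longleftrightarrow> \<pi> permutes {1..n} \<and> (\<forall>x\<in>{1..n}. \<exists>k. (\<pi> ^^ k) 1 = x)"

definition one_line :: "nat \<Rightarrow> (nat \<Rightarrow> nat) \<Rightarrow> nat list" where
  "one_line n \<pi> = map \<pi> [1..<n+1]"

definition cycle_form :: "nat \<Rightarrow> (nat \<Rightarrow> nat) \<Rightarrow> nat list" where
  "cycle_form n \<pi> = map (\<lambda>i. (\<pi> ^^ i) 1) [0..<n]"

definition contains_pattern :: "nat list \<Rightarrow> nat list \<Rightarrow> bool" where
  "contains_pattern w p \<longleftrightarrow>
     (\<exists>idx :: nat \<Rightarrow> nat. strict_mono_on {..<length p} idx \<and>
        (\<forall>a<length p. idx a < length w) \<and>
        (\<forall>a<length p. \<forall>b<length p. (w ! idx a < w ! idx b \<longleftrightarrow> p ! a < p ! b)))"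

definition avoids :: "nat list \<Rightarrow> nat list \<Rightarrow> bool" where
  "avoids w p \<longleftrightarrow> \<not> contains_pattern w p"

end

theory Submission
  imports Defs
begin


definition pk :: "nat \<Rightarrow> nat \<Rightarrow> nat \<Rightarrow> nat" where
  "pk n k i = (if i < 1 \<or> n < i then i else if i < k then i+1 else if i = k then n
               else if i = k+1 then 1 else i - 1)"

definition cf :: "nat \<Rightarrow> nat \<Rightarrow> nat \<Rightarrow> nat" where
  "cf n k m = (if m < k then m+1 else n + k - m)"

lemma pk_pow:
  assumes "1 \<le> k" "k < n" "m < n"
  shows "(pk n k ^^ m) 1 = cf n k m"
  using assms(3)
proof (induction m)
  case 0 then show ?case using assms by (simp add: cf_def)
next
  case (Suc m)
  then have "(pk n k ^^ Suc m) 1 = pk n k (cf n k m)" by simp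
  also have "\<dots> = cf n k (Suc m)" using assms Suc.prems by (auto simp: pk_def cf_def)
  finally show ?case .
qed

lemma pk_pow_n:
  assumes "1 \<le> k" "k < n"
  shows "(pk n k ^^ n) 1 = 1"
proof -
  obtain m where m: "n = Suc m" using assms by (cases n) auto
  have "(pk n k ^^ n) 1 = pk n k (cf n k m)" using pk_pow[OF assms, of m] m by simp
  also have "\<dots> = 1" using assms m by (auto simp: pk_def cf_def)
  finally show ?thesis .
qed

lemma pk_permutes:
  assumes "1 \<le> k" "k < n"
  shows "pk n k permutes {1..n}"
proof (rule bij_imp_permutes)
  have inj: "inj_on (pk n k) {1..n}"
    unfolding inj_on_def using assms by (auto simp: pk_def split: if_splits)
  have sub: "pk n k ` {1..n} \<subseteq> {1..n}" using assms by (auto simp: pk_def)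
  show "bij_betw (pk n k) {1..n} {1..n}"
    using endo_inj_surj[OF _ sub inj] inj by (simp add: bij_betw_def)
  show "\<And>x. x \<notin> {1..n} \<Longrightarrow> pk n k x = x" by (auto simp: pk_def)
qed

lemma pk_cyclic:
  assumes "1 \<le> k" "k < n"
  shows "cyclic_perm n (pk n k)"
  unfolding cyclic_perm_def
proof (intro conjI ballI)
  show "pk n k permutes {1..n}" by (rule pk_permutes[OF assms])
  fix x assume x: "x \<in> {1..n}"
  show "\<exists>m. (pk n k ^^ m) 1 = x"
  proof (cases "x \<le> k")
    case True
    then show ?thesis using x assms pk_pow[OF assms, of "x-1"] by (intro exI[of _ "x-1"]) (auto simp: cf_def)
  next
    case False
    then show ?thesis using x assms pk_pow[OF assms, of "n+k-x"] by (intro exI[of _ "n+k-x"]) (auto simp: cf_def)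
  qed
qed

lemma pk_321:
  assumes "1 \<le> k" "k < n"
  shows "avoids (one_line n (pk n k)) [3,2,1]"
  unfolding avoids_def contains_pattern_def
proof
  assume "\<exists>idx. strict_mono_on {..<length [3,2,1::nat]} idx \<and>
        (\<forall>a<length [3,2,1::nat]. idx a < length (one_line n (pk n k))) \<and>
        (\<forall>a<length [3,2,1::nat]. \<forall>b<length [3,2,1::nat]. (one_line n (pk n k) ! idx a < one_line n (pk n k) ! idx b \<longleftrightarrow> [3,2,1::nat] ! a < [3,2,1::nat] ! b))"
  then obtain idx where sm0: "strict_mono_on {..<length [3,2,1::nat]} idx" and lt0: "\<forall>a<length [3,2,1::nat]. idx a < length (one_line n (pk n k))"
     and cmp0: "\<forall>a<length [3,2,1::nat]. \<forall>b<length [3,2,1::nat]. (one_line n (pk n k) ! idx a < one_line n (pk n k) ! idx b \<longleftrightarrow> [3,2,1::nat] ! a < [3,2,1::nat] ! b)"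
    by blast
  have len: "length (one_line n (pk n k)) = n" by (simp add: one_line_def)
  have sm: "strict_mono_on {..<3} idx" using sm0 by (simp add: eval_nat_numeral)
  have lt: "\<forall>a<3. idx a < n" using lt0 len by simp
  have cmp: "\<forall>a<3. \<forall>b<3. (one_line n (pk n k) ! idx a < one_line n (pk n k) ! idx b \<longleftrightarrow> [3,2,1::nat] ! a < [3,2,1::nat] ! b)"
    using cmp0 by simp
  have nth: "\<And>t. t < n \<Longrightarrow> one_line n (pk n k) ! t = pk n k (t+1)"
    by (simp add: one_line_def nth_map del: upt_Suc)
  have i01: "idx 0 < idx 1" and i12: "idx 1 < idx 2" using sm by (auto simp: strict_mono_on_def)
  have l2: "idx 2 < n" using lt by auto
  have c1: "pk n k (idx 1 + 1) < pk n k (idx 0 + 1)" using cmp[rule_format, of 1 0] nth i01 i12 l2 by simp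
  have c2: "pk n k (idx 2 + 1) < pk n k (idx 1 + 1)" using cmp[rule_format, of 2 1] nth i01 i12 l2 by simp
  show False using c1 c2 i01 i12 l2 assms by (auto simp: pk_def split: if_splits)
qed




lemma mod_small: "(i::nat) < n \<Longrightarrow> t < n \<Longrightarrow> (i + t) mod n = (if i + t < n then i + t else i + t - n)"
proof (cases "i+t<n")
  case True then show ?thesis by (simp add: mod_less)
next
  case False
  assume a: "i < n" "t < n"
  then have "(i + t) mod n = (i + t - n) mod n" using False le_mod_geq by simp
  also have "\<dots> = i + t - n" using a False by simp
  finally show ?thesis using False by simp
qed

lemma arith4:
  fixes i n k t0 t1 t2 t3 :: nat
  assumes "1 \<le> k" "k < n" "i < n" "t0 < t1" "t1 < t2" "t2 < t3" "t3 < n"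
  and "cf n k (if i + t0 < n then i + t0 else i + t0 - n) < cf n k (if i + t3 < n then i + t3 else i + t3 - n)"
  and "cf n k (if i + t3 < n then i + t3 else i + t3 - n) < cf n k (if i + t1 < n then i + t1 else i + t1 - n)"
  and "cf n k (if i + t1 < n then i + t1 else i + t1 - n) < cf n k (if i + t2 < n then i + t2 else i + t2 - n)"
  shows False
  using assms unfolding cf_def by (auto split: if_splits)

lemma cycle_form_pk:
  assumes "1 \<le> k" "k < n" "s < n"
  shows "cycle_form n (pk n k) ! s = cf n k s"
  using assms pk_pow[OF assms(1,2)] by (simp add: cycle_form_def)

lemma pk_rot:
  assumes "1 \<le> k" "k < n" "i < n"
  shows "avoids (rotate i (cycle_form n (pk n k))) [1,3,4,2]"
  unfolding avoids_def contains_pattern_def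
proof
  let ?w = "rotate i (cycle_form n (pk n k))"
  let ?p = "[1,3,4,2::nat]"
  assume "\<exists>idx. strict_mono_on {..<length ?p} idx \<and>
        (\<forall>a<length ?p. idx a < length ?w) \<and>
        (\<forall>a<length ?p. \<forall>b<length ?p. (?w ! idx a < ?w ! idx b \<longleftrightarrow> ?p ! a < ?p ! b))"
  then obtain idx where sm0: "strict_mono_on {..<length ?p} idx" and lt0: "\<forall>a<length ?p. idx a < length ?w"
     and cmp0: "\<forall>a<length ?p. \<forall>b<length ?p. (?w ! idx a < ?w ! idx b \<longleftrightarrow> ?p ! a < ?p ! b)"
    by blast
  have len: "length ?w = n" by (simp add: cycle_form_def)
  have sm: "strict_mono_on {..<4} idx" using sm0 by (simp add: eval_nat_numeral)
  have lt: "\<forall>a<4. idx a < n" using lt0 len by simp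
  have cmp: "\<forall>a<4. \<forall>b<4. (?w ! idx a < ?w ! idx b \<longleftrightarrow> ?p ! a < ?p ! b)"
    using cmp0 by simp
  have nth: "\<And>t. t < n \<Longrightarrow> ?w ! t = cf n k (if i + t < n then i + t else i + t - n)"
  proof -
    fix t assume t: "t < n"
    have "?w ! t = cycle_form n (pk n k) ! ((i + t) mod n)"
      using t len by (simp add: nth_rotate cycle_form_def)
    also have "\<dots> = cf n k ((i + t) mod n)"
      using assms t by (intro cycle_form_pk) auto
    finally show "?w ! t = cf n k (if i + t < n then i + t else i + t - n)"
      using mod_small[OF assms(3) t] by simp
  qed
  have i01: "idx 0 < idx 1" and i12: "idx 1 < idx 2" and i23: "idx 2 < idx 3"
    using sm by (auto simp: strict_mono_on_def)
  have l3: "idx 3 < n" using lt by auto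
  have c1: "?w ! idx 0 < ?w ! idx 3" using cmp[rule_format, of 0 3] by simp
  have c2: "?w ! idx 3 < ?w ! idx 1" using cmp[rule_format, of 3 1] by simp
  have c3: "?w ! idx 1 < ?w ! idx 2" using cmp[rule_format, of 1 2] by simp
  have v0: "?w ! idx 0 = cf n k (if i + idx 0 < n then i + idx 0 else i + idx 0 - n)"
    using nth i01 i12 i23 l3 by (meson less_trans)
  have v1: "?w ! idx 1 = cf n k (if i + idx 1 < n then i + idx 1 else i + idx 1 - n)"
    using nth i01 i12 i23 l3 by (meson less_trans)
  have v2: "?w ! idx 2 = cf n k (if i + idx 2 < n then i + idx 2 else i + idx 2 - n)"
    using nth i01 i12 i23 l3 by (meson less_trans)
  have v3: "?w ! idx 3 = cf n k (if i + idx 3 < n then i + idx 3 else i + idx 3 - n)"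
    using nth l3 by blast
  show False
    using c1 c2 c3 unfolding v0 v1 v2 v3 by (rule arith4[OF assms i01 i12 i23 l3])
qed




lemma cyc_struct:
  assumes cp: "cyclic_perm n \<pi>" and n: "1 \<le> n"
  shows "(\<pi>^^n) 1 = 1 \<and> (\<forall>a b. a < b \<and> b < n \<longrightarrow> (\<pi>^^a) 1 \<noteq> (\<pi>^^b) 1)
         \<and> (\<forall>x\<in>{1..n}. \<exists>m<n. (\<pi>^^m) 1 = x)"
proof -
  define c where "c m = (\<pi>^^m) 1" for m
  have perm: "\<pi> permutes {1..n}" using cp by (simp add: cyclic_perm_def)
  have inj: "inj \<pi>" using perm by (rule permutes_inj)
  have crange: "c m \<in> {1..n}" for m
  proof (induction m)
    case 0 then show ?case using n by (simp add: c_def)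
  next
    case (Suc m)
    have "c (Suc m) = \<pi> (c m)" by (simp add: c_def)
    then show ?case using Suc permutes_in_image[OF perm] by simp
  qed
  have diff: "c (b - a) = 1" if "a < b" "c a = c b" for a b
  proof -
    have "(\<pi>^^a) (c (b - a)) = c b" using that(1) unfolding c_def
      by (metis funpow_add comp_apply le_add_diff_inverse less_imp_le)
    also have "\<dots> = (\<pi>^^a) 1" using that(2) by (simp add: c_def)
    finally show ?thesis using inj_fn[OF inj, of a] by (simp add: inj_def)
  qed
  have "\<not> inj_on c {0..n}"
  proof
    assume "inj_on c {0..n}"
    then have "card {0..n} \<le> card {1..n}"
      by (rule card_inj_on_le) (use crange in auto)
    then show False by simp
  qed
  then obtain a b where ab: "a \<in> {0..n}" "b \<in> {0..n}" "a \<noteq> b" "c a = c b"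
    unfolding inj_on_def by blast
  have "\<exists>q. 0 < q \<and> q \<le> n \<and> c q = 1"
  proof (cases "a < b")
    case True
    then show ?thesis using diff[OF True ab(4)] ab by (intro exI[of _ "b - a"]) auto
  next
    case False
    then have "b < a" using ab by simp
    then show ?thesis using diff[OF \<open>b < a\<close>] ab by (intro exI[of _ "a - b"]) auto
  qed
  then obtain q where q: "0 < q" "q \<le> n" "c q = 1" by blast
  define p where "p = (LEAST p. 0 < p \<and> c p = 1)"
  have pprop: "0 < p \<and> c p = 1" unfolding p_def by (rule LeastI[of _ q]) (use q in simp)
  have ple: "p \<le> q" unfolding p_def by (rule Least_le) (use q in simp)
  have pmin: "c r \<noteq> 1" if "0 < r" "r < p" for r
    using not_less_Least[of r "\<lambda>p. 0 < p \<and> c p = 1"] that unfolding p_def by blast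
  have cmod: "c (m mod p) = c m" for m
    unfolding c_def by (rule funpow_mod_eq) (use pprop in \<open>simp add: c_def\<close>)
  have cover: "{1..n} \<subseteq> c ` {0..<p}"
  proof
    fix x assume x: "x \<in> {1..n}"
    then obtain k where "(\<pi>^^k) 1 = x" using cp unfolding cyclic_perm_def by blast
    then have "c (k mod p) = x" using cmod by (simp add: c_def)
    moreover have "k mod p < p" using pprop by simp
    ultimately show "x \<in> c ` {0..<p}" by force
  qed
  have "n \<le> p"
  proof -
    have "card {1..n} \<le> card (c ` {0..<p})" using cover by (intro card_mono) auto
    also have "\<dots> \<le> card {0..<p}" by (rule card_image_le) simp
    finally show ?thesis by simp
  qed
  then have pn: "p = n" using ple q by simp
  show ?thesis
  proof (intro conjI allI impI ballI)
    show "(\<pi>^^n) 1 = 1" using pprop pn by (simp add: c_def)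
  next
    fix a b assume "a < b \<and> b < n"
    then show "(\<pi>^^a) 1 \<noteq> (\<pi>^^b) 1"
      using diff[of a b] pmin[of "b - a"] pn by (auto simp: c_def)
  next
    fix x assume "x \<in> {1..n}"
    then have "x \<in> c ` {0..<n}" using cover pn by blast
    then show "\<exists>m<n. (\<pi>^^m) 1 = x" by (auto simp: c_def)
  qed
qed




lemma less3: "(a::nat) < 3 \<longleftrightarrow> a = 0 \<or> a = 1 \<or> a = 2" by auto
lemma less4: "(a::nat) < 4 \<longleftrightarrow> a = 0 \<or> a = 1 \<or> a = 2 \<or> a = 3" by auto

lemma contains321:
  assumes "i0 < i1" "i1 < i2" "i2 < length w" "w!i1 < w!i0" "w!i2 < w!i1"
  shows "contains_pattern w [3,2,1]"
  unfolding contains_pattern_def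
proof (intro exI[of _ "\<lambda>t. [i0,i1,i2] ! t"] conjI allI impI)
  show "strict_mono_on {..<length [3,2,1::nat]} (\<lambda>t. [i0, i1, i2] ! t)"
    unfolding strict_mono_on_def
  proof (intro allI impI, elim conjE)
    fix r s assume "r \<in> {..<length [3,2,1::nat]}" "s \<in> {..<length [3,2,1::nat]}" "r < s"
    then have "(r = 0 \<and> s = 1) \<or> (r = 0 \<and> s = 2) \<or> (r = 1 \<and> s = 2)" by auto
    then show "[i0, i1, i2] ! r < [i0, i1, i2] ! s" using assms by auto
  qed
  fix a assume "a < length [3,2,1::nat]"
  then have a: "a = 0 \<or> a = 1 \<or> a = 2" by auto
  then show "[i0, i1, i2] ! a < length w" using assms by auto
  fix b assume "b < length [3,2,1::nat]"
  then have b: "b = 0 \<or> b = 1 \<or> b = 2" by auto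
  show "(w ! ([i0, i1, i2] ! a) < w ! ([i0, i1, i2] ! b)) = ([3, 2, 1::nat] ! a < [3, 2, 1] ! b)"
    using a b assms by auto
qed

lemma contains1342:
  assumes "i0 < i1" "i1 < i2" "i2 < i3" "i3 < length w"
    "w!i0 < w!i3" "w!i3 < w!i1" "w!i1 < w!i2"
  shows "contains_pattern w [1,3,4,2]"
  unfolding contains_pattern_def
proof (intro exI[of _ "\<lambda>t. [i0,i1,i2,i3] ! t"] conjI allI impI)
  show "strict_mono_on {..<length [1,3,4,2::nat]} (\<lambda>t. [i0, i1, i2, i3] ! t)"
    unfolding strict_mono_on_def
  proof (intro allI impI, elim conjE)
    fix r s assume "r \<in> {..<length [1,3,4,2::nat]}" "s \<in> {..<length [1,3,4,2::nat]}" "r < s"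
    then have "(r = 0 \<and> s = 1) \<or> (r = 0 \<and> s = 2) \<or> (r = 0 \<and> s = 3) \<or> (r = 1 \<and> s = 2)
       \<or> (r = 1 \<and> s = 3) \<or> (r = 2 \<and> s = 3)" by auto
    then show "[i0, i1, i2, i3] ! r < [i0, i1, i2, i3] ! s" using assms by auto
  qed
  fix a assume "a < length [1,3,4,2::nat]"
  then have a: "a = 0 \<or> a = 1 \<or> a = 2 \<or> a = 3" by auto
  then show "[i0, i1, i2, i3] ! a < length w" using assms by auto
  fix b assume "b < length [1,3,4,2::nat]"
  then have b: "b = 0 \<or> b = 1 \<or> b = 2 \<or> b = 3" by auto
  show "(w ! ([i0, i1, i2, i3] ! a) < w ! ([i0, i1, i2, i3] ! b)) = ([1,3,4,2::nat] ! a < [1,3,4,2] ! b)"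
    using a b assms by auto
qed

lemma mono_gap:
  fixes f :: "nat \<Rightarrow> nat"
  assumes "\<And>x y. lo \<le> x \<Longrightarrow> x < y \<Longrightarrow> y \<le> hi \<Longrightarrow> f x < f y"
  shows "lo \<le> x \<Longrightarrow> x + d \<le> hi \<Longrightarrow> f x + d \<le> f (x + d)"
proof (induction d)
  case 0 then show ?case by simp
next
  case (Suc d)
  then have "f x + d \<le> f (x + d)" by simp
  moreover have "f (x + d) < f (x + Suc d)" using assms[of "x + d" "x + Suc d"] Suc.prems by simp
  ultimately show ?case by simp
qed




lemma nec:
  assumes n3: "3 \<le> n" and cp: "cyclic_perm n \<pi>"
    and av1: "avoids (one_line n \<pi>) [3,2,1]"
    and av2: "avoids (cycle_form n \<pi>) [1,3,4,2]"
  shows "\<exists>k. 1 \<le> k \<and> k < n \<and> \<pi> = pk n k"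
proof -
  define c where "c m = (\<pi>^^m) 1" for m
  have perm: "\<pi> permutes {1..n}" using cp by (simp add: cyclic_perm_def)
  have inj: "inj \<pi>" using perm by (rule permutes_inj)
  have prange: "\<And>x. x \<in> {1..n} \<Longrightarrow> \<pi> x \<in> {1..n}" using permutes_in_image[OF perm] by blast
  have crange: "c m \<in> {1..n}" for m
  proof (induction m)
    case 0 then show ?case using n3 by (simp add: c_def)
  next
    case (Suc m)
    have "c (Suc m) = \<pi> (c m)" by (simp add: c_def)
    then show ?case using Suc prange by simp
  qed
  have c0: "c 0 = 1" by (simp add: c_def)
  have cS: "c (Suc m) = \<pi> (c m)" for m by (simp add: c_def)
  have cs: "(\<pi>^^n) 1 = 1 \<and> (\<forall>a b. a < b \<and> b < n \<longrightarrow> (\<pi>^^a) 1 \<noteq> (\<pi>^^b) 1)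
         \<and> (\<forall>x\<in>{1..n}. \<exists>m<n. (\<pi>^^m) 1 = x)"
    using cyc_struct[OF cp] n3 by simp
  have cn: "c n = 1" using cs by (simp add: c_def)
  have dist: "\<And>a b. a < b \<Longrightarrow> b < n \<Longrightarrow> c a \<noteq> c b" using cs by (simp add: c_def)
  have dist': "\<And>a b. a < n \<Longrightarrow> b < n \<Longrightarrow> a \<noteq> b \<Longrightarrow> c a \<noteq> c b"
    using dist by (metis linorder_neqE_nat)
  have cover: "\<And>x. x \<in> {1..n} \<Longrightarrow> \<exists>m<n. c m = x" using cs by (simp add: c_def)
  have cfn: "\<And>m. m < n \<Longrightarrow> cycle_form n \<pi> ! m = c m" by (simp add: cycle_form_def c_def)
  have cflen: "length (cycle_form n \<pi>) = n" by (simp add: cycle_form_def)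
  have oln: "\<And>t. t < n \<Longrightarrow> one_line n \<pi> ! t = \<pi> (t+1)"
    by (simp add: one_line_def nth_map del: upt_Suc)
  have ollen: "length (one_line n \<pi>) = n" by (simp add: one_line_def)
  obtain j where j: "j < n" "c j = n" using cover[of n] n3 by auto
  have j0: "j \<noteq> 0"
  proof
    assume "j = 0" then show False using j c0 n3 by simp
  qed
  have cross: "c a < c d" if "a < j" "j < d" "d < n" for a d
  proof (cases "a = 0")
    case True
    then show ?thesis using dist[of 0 d] crange[of d] c0 that by force
  next
    case False
    show ?thesis
    proof (rule ccontr)
      assume "\<not> c a < c d"
      then have 1: "c d < c a" using dist[of a d] that by force
      have 2: "c a < c j" using dist[of a j] that crange[of a] j by force
      have 3: "c 0 < c d" using dist[of 0 d] that crange[of d] c0 by force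
      have "contains_pattern (cycle_form n \<pi>) [1,3,4,2]"
        by (rule contains1342[of 0 a j d]) (use that False 1 2 3 j in \<open>simp_all add: cfn cflen\<close>)
      then show False using av2 by (simp add: avoids_def)
    qed
  qed
  have lowA: "c a \<le> j" if "a < j" for a
  proof (rule ccontr)
    assume "\<not> c a \<le> j"
    have can: "c a < n" using dist[of a j] that j crange[of a] by force
    have "{1..c a} \<subseteq> c ` {0..<j}"
    proof
      fix v assume v: "v \<in> {1..c a}"
      then obtain m where m: "m < n" "c m = v" using cover[of v] can by auto
      have "m \<noteq> j" using m v j can by auto
      moreover have "\<not> j < m" using cross[of a m] that m v by auto
      ultimately show "v \<in> c ` {0..<j}" using m by force
    qed
    then have "card {1..c a} \<le> card (c ` {0..<j})" by (intro card_mono) auto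
    also have "\<dots> \<le> j" using card_image_le[of "{0..<j}" c] by simp
    finally show False using \<open>\<not> c a \<le> j\<close> by simp
  qed
  have highB: "j < c d" if "j < d" "d < n" for d
  proof (rule ccontr)
    assume "\<not> j < c d"
    have "c ` {0..<j} \<subseteq> {1..<c d}" using cross that crange by force
    then have "card (c ` {0..<j}) \<le> card {1..<c d}" by (intro card_mono) auto
    moreover have "inj_on c {0..<j}" unfolding inj_on_def
    proof (intro ballI impI)
      fix x y assume "x \<in> {0..<j}" "y \<in> {0..<j}" "c x = c y"
      then show "x = y" using dist'[of x y] j by auto
    qed
    ultimately have "j \<le> c d - 1" by (simp add: card_image)
    moreover have "1 \<le> c d" using crange[of d] by simp
    ultimately show False using \<open>\<not> j < c d\<close> by linarith
  qed
  define q where "q = c (j - 1)"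
  have q: "\<pi> q = n" "1 \<le> q" "q \<le> j" using j j0 cS[of "j-1"] lowA[of "j-1"] crange[of "j-1"]
    by (auto simp: q_def)
  define p where "p = c (n - 1)"
  have p: "\<pi> p = 1" "j + 1 \<le> p" "p \<le> n"
  proof -
    show "\<pi> p = 1" using cS[of "n-1"] cn n3 by (simp add: p_def)
    show "p \<le> n" using crange by (simp add: p_def)
    show "j + 1 \<le> p"
    proof (cases "n - 1 = j")
      case True then show ?thesis using j n3 by (simp add: p_def)
    next
      case False then have "j < n - 1" using j by linarith
      then show ?thesis using highB[of "n-1"] n3 by (simp add: p_def)
    qed
  qed
  have incA: "\<pi> x < \<pi> y" if "q < x" "x < y" "y \<le> n" for x y
  proof (rule ccontr)
    assume "\<not> \<pi> x < \<pi> y"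
    moreover have "\<pi> x \<noteq> \<pi> y" using inj that by (auto dest: injD)
    ultimately have 1: "\<pi> y < \<pi> x" by simp
    have "\<pi> x \<noteq> n" using q inj that by (metis injD less_irrefl)
    then have 2: "\<pi> x < \<pi> q" using prange[of x] that q by auto
    have e1: "one_line n \<pi> ! (q-1) = \<pi> q" using oln[of "q-1"] q that by simp
    have e2: "one_line n \<pi> ! (x-1) = \<pi> x" using oln[of "x-1"] q that by simp
    have e3: "one_line n \<pi> ! (y-1) = \<pi> y" using oln[of "y-1"] q that by simp
    have "contains_pattern (one_line n \<pi>) [3,2,1]"
      by (rule contains321[of "q-1" "x-1" "y-1"]) (use that q 1 2 e1 e2 e3 ollen in simp_all)
    then show False using av1 by (simp add: avoids_def)
  qed
  have incB: "\<pi> x < \<pi> y" if "1 \<le> x" "x < y" "y < p" for x y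
  proof (rule ccontr)
    assume "\<not> \<pi> x < \<pi> y"
    moreover have "\<pi> x \<noteq> \<pi> y" using inj that by (auto dest: injD)
    ultimately have 1: "\<pi> y < \<pi> x" by simp
    have "\<pi> y \<noteq> 1" using p inj that by (metis injD less_irrefl)
    then have 2: "\<pi> p < \<pi> y" using prange[of y] that p by auto
    have e1: "one_line n \<pi> ! (x-1) = \<pi> x" using oln[of "x-1"] p that by simp
    have e2: "one_line n \<pi> ! (y-1) = \<pi> y" using oln[of "y-1"] p that by simp
    have e3: "one_line n \<pi> ! (p-1) = \<pi> p" using oln[of "p-1"] p that by simp
    have "contains_pattern (one_line n \<pi>) [3,2,1]"
      by (rule contains321[of "x-1" "y-1" "p-1"]) (use that p 1 2 e1 e2 e3 ollen in simp_all)
    then show False using av1 by (simp add: avoids_def)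
  qed
  have imgB: "\<pi> x = 1 \<or> (j + 1 \<le> \<pi> x \<and> \<pi> x \<le> n - 1)" if xs: "j + 1 \<le> x" "x \<le> n" for x
  proof -
    obtain m where m: "m < n" "c m = x" using cover[of x] xs by auto
    have "j \<le> m" using lowA[of m] m that by force
    show ?thesis
    proof (cases "m = n - 1")
      case True then show ?thesis using cS[of m] m cn n3 by simp
    next
      case False
      then have "Suc m < n" "j < Suc m" using m \<open>j \<le> m\<close> by auto
      then have "j < c (Suc m)" "c (Suc m) \<noteq> n" "c (Suc m) \<le> n"
        using highB[of "Suc m"] dist'[of j "Suc m"] j crange[of "Suc m"] by auto
      then have "j + 1 \<le> \<pi> x" "\<pi> x \<le> n - 1" using cS[of m] m by auto
      then show ?thesis by simp
    qed
  qed
  have imgA: "\<pi> x = n \<or> (2 \<le> \<pi> x \<and> \<pi> x \<le> j)" if xs: "1 \<le> x" "x \<le> j" for x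
  proof -
    obtain m where m: "m < n" "c m = x" using cover[of x] xs j by auto
    have "m < j"
    proof (rule ccontr)
      assume "\<not> m < j"
      then have "m = j \<or> j < m" by auto
      then show False using j m that highB[of m] by auto
    qed
    show ?thesis
    proof (cases "m = j - 1")
      case True then show ?thesis using cS[of m] m j j0 by simp
    next
      case False
      then have "Suc m < j" using \<open>m < j\<close> by auto
      then have "c (Suc m) \<le> j" "c (Suc m) \<noteq> 1" "1 \<le> c (Suc m)"
        using lowA[of "Suc m"] dist[of 0 "Suc m"] c0 j crange[of "Suc m"] by auto
      then show ?thesis using cS[of m] m by simp
    qed
  qed
  have gapB: "\<pi> x + d \<le> \<pi> (x + d)" if "j + 1 \<le> x" "x + d \<le> n" for x d
    by (rule mono_gap[of "j+1" n \<pi>]) (use incA q that in auto)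
  have gapA: "\<pi> x + d \<le> \<pi> (x + d)" if "1 \<le> x" "x + d \<le> j" for x d
    by (rule mono_gap[of 1 j \<pi>]) (use incB p that in auto)
  have valB: "\<pi> x = (if x = j + 1 then 1 else x - 1)" if "j + 1 \<le> x" "x \<le> n" for x
  proof -
    have up: "\<pi> x \<le> x - 1"
    proof -
      have "\<pi> x + (n - x) \<le> \<pi> n" using gapB[of x "n - x"] that by simp
      moreover have "\<pi> n \<le> n - 1" using imgB[of n] j n3 by auto
      ultimately show ?thesis using that by linarith
    qed
    show ?thesis
    proof (cases "x = j + 1")
      case True then show ?thesis using up imgB[of x] that by auto
    next
      case False
      then have x2: "j + 2 \<le> x" using that by simp
      have "\<pi> (j+1) < \<pi> (j+2)" using incA[of "j+1" "j+2"] q x2 that by simp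
      moreover have "1 \<le> \<pi> (j+1)" using prange[of "j+1"] j by simp
      ultimately have "j + 1 \<le> \<pi> (j+2)" using imgB[of "j+2"] x2 that by auto
      moreover have "\<pi> (j+2) + (x - (j+2)) \<le> \<pi> x"
      proof -
        have H: "\<pi> (j+2) + (x - (j+2)) \<le> \<pi> (j+2 + (x - (j+2)))" by (rule gapB) (use x2 that in auto)
        have eq: "j+2 + (x - (j+2)) = x" using x2 by simp
        show ?thesis using H eq by metis
      qed
      ultimately show ?thesis using up False x2 by simp
    qed
  qed
  have valA: "\<pi> x = (if x = j then n else x + 1)" if "1 \<le> x" "x \<le> j" for x
  proof -
    have lo: "x + 1 \<le> \<pi> x"
    proof -
      have "\<pi> 1 + (x - 1) \<le> \<pi> x" using gapA[of 1 "x - 1"] that by simp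
      moreover have "2 \<le> \<pi> 1" using imgA[of 1] j0 n3 by auto
      ultimately show ?thesis using that by linarith
    qed
    show ?thesis
    proof (cases "x = j")
      case True then show ?thesis using lo imgA[of x] that by auto
    next
      case False
      then have x2: "x + 1 \<le> j" using that by simp
      have "\<pi> (j-1) < \<pi> j" using incB[of "j-1" j] x2 p that by simp
      moreover have "\<pi> j \<le> n" using prange[of j] j j0 by simp
      ultimately have "\<pi> (j-1) \<le> j" using imgA[of "j-1"] x2 that by auto
      moreover have "\<pi> x + (j - 1 - x) \<le> \<pi> (j - 1)" using gapA[of x "j - 1 - x"] x2 that by simp
      ultimately show ?thesis using lo False x2 by simp
    qed
  qed
  have "\<pi> = pk n j"
  proof
    fix x
    show "\<pi> x = pk n j x"
    proof (cases "x \<in> {1..n}")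
      case False
      then show ?thesis using permutes_not_in[OF perm False] by (auto simp: pk_def)
    next
      case True
      show ?thesis
      proof (cases "x \<le> j")
        case True2: True
        then show ?thesis using valA[of x] True by (auto simp: pk_def)
      next
        case False
        then show ?thesis using valB[of x] True by (auto simp: pk_def)
      qed
    qed
  qed
  then show ?thesis using j(1) j0 by (intro exI[of _ j]) simp
qed




lemma pk_inj: "inj_on (pk n) {1..<n}"
proof (rule inj_onI)
  fix k k' assume k: "k \<in> {1..<n}" and k': "k' \<in> {1..<n}" and eq: "pk n k = pk n k'"
  have "pk n k' k = n" using eq k by (metis pk_def atLeastLessThan_iff less_irrefl not_less order_less_imp_le)
  then show "k = k'" using k k' by (auto simp: pk_def split: if_splits)
qed

theorem lemma3p4:
  fixes n :: nat
  assumes "n \<ge> 3"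
  shows "card {\<pi>. cyclic_perm n \<pi> \<and> avoids (one_line n \<pi>) [3,2,1] \<and>
                 (\<forall>i<n. avoids (rotate i (cycle_form n \<pi>)) [1,3,4,2])} = n - 1"
proof -
  have "{\<pi>. cyclic_perm n \<pi> \<and> avoids (one_line n \<pi>) [3,2,1] \<and>
                 (\<forall>i<n. avoids (rotate i (cycle_form n \<pi>)) [1,3,4,2])} = pk n ` {1..<n}"
  proof (intro equalityI subsetI)
    fix \<pi> assume "\<pi> \<in> {\<pi>. cyclic_perm n \<pi> \<and> avoids (one_line n \<pi>) [3,2,1] \<and>
                 (\<forall>i<n. avoids (rotate i (cycle_form n \<pi>)) [1,3,4,2])}"
    then have h: "cyclic_perm n \<pi>" "avoids (one_line n \<pi>) [3,2,1]"
       "\<forall>i<n. avoids (rotate i (cycle_form n \<pi>)) [1,3,4,2]" by auto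
    have "avoids (rotate 0 (cycle_form n \<pi>)) [1,3,4,2]" using h(3) assms by (metis gr0I not_numeral_le_zero)
    then have "avoids (cycle_form n \<pi>) [1,3,4,2]" by simp
    then obtain k where "1 \<le> k" "k < n" "\<pi> = pk n k" using nec[OF assms h(1,2)] by blast
    then show "\<pi> \<in> pk n ` {1..<n}" by auto
  next
    fix \<pi> assume "\<pi> \<in> pk n ` {1..<n}"
    then obtain k where k: "1 \<le> k" "k < n" "\<pi> = pk n k" by auto
    show "\<pi> \<in> {\<pi>. cyclic_perm n \<pi> \<and> avoids (one_line n \<pi>) [3,2,1] \<and>
                 (\<forall>i<n. avoids (rotate i (cycle_form n \<pi>)) [1,3,4,2])}"
      using pk_cyclic[OF k(1,2)] pk_321[OF k(1,2)] pk_rot[OF k(1,2)] k(3) by auto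
  qed
  also have "card \<dots> = n - 1" using card_image[OF pk_inj[of n]] by simp
  finally show ?thesis .
qed


end
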